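(* Let $\mathcal{B}=\langle V,F,E\rangle$ be a self-contained finite bipartite graph and let $\mathcal{S}_F$ be the set of its minimal self-contained sets. Let $S\in\mathcal{S}_F$ and let $\mathcal{B}'$ be the subgraph of $\mathcal{B}$ induced by $V'=V\setminus\mathrm{adj}_{\mathcal{B}}(S)$ and $F'=F\setminus S$. Then (1) $\mathcal{B}'$ is self-contained, and (2) every set in $\mathcal{S}_F\setminus\{S\}$ is minimal self-contained in $\mathcal{B}'$.
   Context: $\mathcal{B}=\langle V,F,E\rangle$ is bipartite with variable vertices $V$ and constraint vertices $F$; $\mathrm{adj}_{\mathcal{B}}(X)$ is the set of vertices adjacent to some vertex of $X$. A set $F'\subseteq F$ is self-contained (in $\mathcal{B}$) if $|F'|=|\mathrm{adj}_{\mathcal{B}}(F')|$ and $|F''|\le|\mathrm{adj}_{\mathcal{B}}(F'')|$ for all $F''\subseteq F'$. $\mathcal{B}$ is self-contained if $|F|=|V|$ and $F$ is self-contained. A non-empty self-contained set is minimal self-contained if none of its non-empty strict subsets is self-contained. *)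

theory Defs
  imports Main
begin

text \<open>A bipartite graph is given by variable vertices V :: 'v set, constraint vertices
F :: 'f set (disjoint since of different types) and edges E :: ('f \<times> 'v) set with E \<subseteq> F \<times> V.\<close>

definition bipartite :: "'v set \<Rightarrow> 'f set \<Rightarrow> ('f \<times> 'v) set \<Rightarrow> bool" where
  "bipartite V F E \<longleftrightarrow> E \<subseteq> F \<times> V"

definition adj :: "('f \<times> 'v) set \<Rightarrow> 'f set \<Rightarrow> 'v set" where
  "adj E X = {v. \<exists>f\<in>X. (f, v) \<in> E}"

definition self_contained_set :: "'v set \<Rightarrow> 'f set \<Rightarrow> ('f \<times> 'v) set \<Rightarrow> 'f set \<Rightarrow> bool" where
  "self_contained_set V F E F' \<longleftrightarrow> F' \<subseteq> F \<and> card F' = card (adj E F') \<and>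
     (\<forall>F''. F'' \<subseteq> F' \<longrightarrow> card F'' \<le> card (adj E F''))"

definition self_contained_graph :: "'v set \<Rightarrow> 'f set \<Rightarrow> ('f \<times> 'v) set \<Rightarrow> bool" where
  "self_contained_graph V F E \<longleftrightarrow> card F = card V \<and> self_contained_set V F E F"

definition minimal_self_contained :: "'v set \<Rightarrow> 'f set \<Rightarrow> ('f \<times> 'v) set \<Rightarrow> 'f set \<Rightarrow> bool" where
  "minimal_self_contained V F E S \<longleftrightarrow> S \<noteq> {} \<and> self_contained_set V F E S \<and>
     (\<forall>T. T \<subset> S \<and> T \<noteq> {} \<longrightarrow> \<not> self_contained_set V F E T)"

definition induced_edges :: "('f \<times> 'v) set \<Rightarrow> 'v set \<Rightarrow> 'f set \<Rightarrow> ('f \<times> 'v) set" where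
  "induced_edges E V' F' = E \<inter> (F' \<times> V')"

end

theory Submission
  imports Defs
begin

lemma adj_Un: "adj E (A \<union> B) = adj E A \<union> adj E B"
  unfolding adj_def by auto

lemma adj_mono: "A \<subseteq> B \<Longrightarrow> adj E A \<subseteq> adj E B"
  unfolding adj_def by auto

lemma adj_sub: "E \<subseteq> F \<times> V \<Longrightarrow> adj E X \<subseteq> V"
  unfolding adj_def by auto

lemma adj_induced: "X \<subseteq> F' \<Longrightarrow> adj (induced_edges E V' F') X = adj E X \<inter> V'"
  unfolding adj_def induced_edges_def by auto

lemma key:
  assumes fV: "finite V" and fF: "finite F" and EB: "E \<subseteq> F \<times> V"
    and hall: "\<forall>X. X \<subseteq> F \<longrightarrow> card X \<le> card (adj E X)"
    and A: "A \<subseteq> F" "card A = card (adj E A)"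
    and B: "B \<subseteq> F" "card B = card (adj E B)"
  shows "card (A \<inter> B) = card (adj E (A \<inter> B))"
    and "card (adj E A \<inter> adj E B) \<le> card (A \<inter> B)"
proof -
  have fA: "finite A" "finite B" using finite_subset[OF A(1) fF] finite_subset[OF B(1) fF] by auto
  have fa: "finite (adj E X)" for X using finite_subset[OF adj_sub[OF EB] fV] .
  have c1: "card (A \<union> B) + card (A \<inter> B) = card A + card B"
    using card_Un_Int[OF fA] by linarith
  have c2: "card (adj E A \<union> adj E B) + card (adj E A \<inter> adj E B) = card (adj E A) + card (adj E B)"
    using card_Un_Int[OF fa[of A] fa[of B]] by linarith
  have h1: "card (A \<union> B) \<le> card (adj E A \<union> adj E B)"
    unfolding adj_Un[symmetric] using A(1) B(1) by (intro hall[rule_format]) auto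
  have h2: "card (A \<inter> B) \<le> card (adj E (A \<inter> B))" using A(1) by (intro hall[rule_format]) auto
  have h3: "card (adj E (A \<inter> B)) \<le> card (adj E A \<inter> adj E B)"
    proof (rule card_mono)
    show "finite (adj E A \<inter> adj E B)" using fa[of A] by simp
    show "adj E (A \<inter> B) \<subseteq> adj E A \<inter> adj E B" unfolding adj_def by auto
  qed
  show "card (A \<inter> B) = card (adj E (A \<inter> B))"
    using c1 c2 h1 h2 h3 A B by linarith
  show "card (adj E A \<inter> adj E B) \<le> card (A \<inter> B)"
    using c1 c2 h1 A B by linarith
qed

theorem lemma33:
  fixes V :: "'v set" and F :: "'f set" and E :: "('f \<times> 'v) set" and S :: "'f set"
  assumes "finite V" and "finite F" and "bipartite V F E"
    and "self_contained_graph V F E"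
    and "S \<in> {X. minimal_self_contained V F E X}"
  shows "self_contained_graph (V - adj E S) (F - S) (induced_edges E (V - adj E S) (F - S)) \<and>
    (\<forall>T \<in> {X. minimal_self_contained V F E X} - {S}.
       minimal_self_contained (V - adj E S) (F - S) (induced_edges E (V - adj E S) (F - S)) T)"
proof -
  note fV = assms(1) and fF = assms(2)
  have EB: "E \<subseteq> F \<times> V" using assms(3) unfolding bipartite_def .
  have fa: "finite (adj E X)" for X using finite_subset[OF adj_sub[OF EB] fV] .
  have cFV: "card F = card V" and hall: "\<forall>X. X \<subseteq> F \<longrightarrow> card X \<le> card (adj E X)"
    using assms(4) unfolding self_contained_graph_def self_contained_set_def by auto
  have Sm: "S \<noteq> {}" "S \<subseteq> F" "card S = card (adj E S)"
    "\<forall>X. X \<subseteq> S \<longrightarrow> card X \<le> card (adj E X)"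
    "\<forall>T. T \<subset> S \<and> T \<noteq> {} \<longrightarrow> \<not> self_contained_set V F E T"
    using assms(5) unfolding minimal_self_contained_def self_contained_set_def by auto
  define V' where "V' = V - adj E S"
  define F' where "F' = F - S"
  define E' where "E' = induced_edges E V' F'"
  have adjE': "adj E' X = adj E X - adj E S" if "X \<subseteq> F'" for X
  proof -
    have "adj E' X = adj E X \<inter> V'" unfolding E'_def by (rule adj_induced[OF that])
    then show ?thesis using adj_sub[OF EB, of X] unfolding V'_def by blast
  qed
  have fS: "finite S" using finite_subset[OF Sm(2) fF] .
  have cV': "card V' = card V - card (adj E S)"
    unfolding V'_def using adj_sub[OF EB] fV by (simp add: card_Diff_subset fa)
  have cF': "card F' = card F - card S"
    unfolding F'_def using Sm fS by (simp add: card_Diff_subset)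
  have hall': "card X \<le> card (adj E' X)" if X: "X \<subseteq> F'" for X
  proof -
    have fX: "finite X" using X fF unfolding F'_def by (meson Diff_subset finite_subset)
    have d: "X \<inter> S = {}" using X unfolding F'_def by blast
    have "card X + card S = card (X \<union> S)" using d fX fS card_Un_disjoint by metis
    also have "\<dots> \<le> card (adj E (X \<union> S))" using X Sm(2) unfolding F'_def by (intro hall[rule_format]) auto
    also have "adj E (X \<union> S) = (adj E X - adj E S) \<union> adj E S" by (simp add: adj_Un)
    also have "card \<dots> = card (adj E X - adj E S) + card (adj E S)"
      by (rule card_Un_disjoint) (auto simp: fa)
    finally show ?thesis using adjE'[OF X] Sm by simp
  qed
  have part1: "self_contained_graph V' F' E'"
  proof -
    have "card (adj E' F') \<le> card V'"
      using adjE'[of F'] adj_sub[OF EB] fV unfolding V'_def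
      by (intro card_mono) auto
    then show ?thesis using hall'[of F'] cV' cF' cFV Sm
      unfolding self_contained_graph_def self_contained_set_def
      by (auto intro: hall')
  qed
  have part2: "minimal_self_contained V' F' E' T"
    if T: "minimal_self_contained V F E T" "T \<noteq> S" for T
  proof -
    have Tm: "T \<noteq> {}" "T \<subseteq> F" "card T = card (adj E T)"
      "\<forall>X. X \<subseteq> T \<longrightarrow> card X \<le> card (adj E X)"
      "\<forall>U. U \<subset> T \<and> U \<noteq> {} \<longrightarrow> \<not> self_contained_set V F E U"
      using T(1) unfolding minimal_self_contained_def self_contained_set_def by auto
    note k = key[OF fV fF EB hall Tm(2,3) Sm(2,3)]
    have TS: "T \<inter> S = {}"
    proof (rule ccontr)
      assume ne: "T \<inter> S \<noteq> {}"
      have sc: "self_contained_set V F E (T \<inter> S)"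
        unfolding self_contained_set_def using k(1) Tm(2) hall by auto
      have "T \<inter> S = T" using Tm(5) ne sc by blast
      moreover have "T \<inter> S = S" using Sm(5) ne sc by blast
      ultimately show False using T(2) by simp
    qed
    have adjd: "adj E T \<inter> adj E S = {}"
      using k(2) TS fa by (simp add: card_eq_0_iff)
    have TF': "T \<subseteq> F'" using TS Tm(2) unfolding F'_def by blast
    have eq: "adj E' X = adj E X" if "X \<subseteq> T" for X
      using adjE'[of X] that TF' adj_mono[OF that, of E] adjd by blast
    show ?thesis
      unfolding minimal_self_contained_def self_contained_set_def
    proof (intro conjI allI impI)
      show "T \<noteq> {}" "T \<subseteq> F'" by fact+
      show "card T = card (adj E' T)" using eq Tm by simp
      show "card X \<le> card (adj E' X)" if "X \<subseteq> T" for X using eq that Tm by simp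
      show "\<not> (U \<subseteq> F' \<and> card U = card (adj E' U) \<and>
             (\<forall>F''. F'' \<subseteq> U \<longrightarrow> card F'' \<le> card (adj E' F'')))"
        if U: "U \<subset> T \<and> U \<noteq> {}" for U
      proof
        assume H: "U \<subseteq> F' \<and> card U = card (adj E' U) \<and>
             (\<forall>F''. F'' \<subseteq> U \<longrightarrow> card F'' \<le> card (adj E' F''))"
        have "self_contained_set V F E U"
          unfolding self_contained_set_def using H U eq Tm(2) by auto
        then show False using Tm(5) U by blast
      qed
    qed
  qed
  show ?thesis unfolding V'_def[symmetric] F'_def[symmetric] E'_def[symmetric]
    using part1 part2 by simp
qed

end
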